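(* Assume the standing hypotheses described in the context. Take $\theta\ge0$, $0\le t\le\lambda$, and $x_*,x,y\in\mathbb X$. If $\lambda<R$, $\|x-x_0\|\le t$, $\|x_*-x\|\le\lambda-t$, $F(x_* )=0$ and \[\|F'(x_0)^{-1}[F(x)+F'(x)(y-x)]\|\le\theta\|F'(x_0)^{-1}F(x)\|,\] then \[\|x_*-y\|\le\Big[\frac{1+\theta}{2}+\frac{2\theta}{\kappa}\Big]\|x_*-x\|,\] \[\|x_*-y\|\le\Big[\frac{1+\theta}{2}\frac{D^-f'(\lambda)}{|f'(\lambda)|}\|x_*-x\|+\theta\,\frac{2+f'(\lambda)}{|f'(\lambda)|}\Big]\|x_*-x\|.\]
   Context: Standing hypotheses: $\mathbb X,\mathbb Y$ are Banach spaces; $B(x,r)$ is the open ball. $R\in\mathbb R$, $C\subseteq\mathbb X$, $F:C\to\mathbb Y$ is continuous and continuously differentiable on $\mathrm{int}(C)$, $x_0\in\mathrm{int}(C)$ with $F'(x_0)$ non-singular, $f:[0,R)\to\mathbb R$ is continuously differentiable, $B(x_0,R)\subseteq C$, $\|F'(x_0)^{-1}[F'(y)-F'(x)]\|\le f'(\|y-x\|+\|x-x_0\|)-f'(\|x-x_0\|)$ for all $x,y\in B(x_0,R)$ with $\|x-x_0\|+\|y-x\|<R$, $\|F'(x_0)^{-1}F(x_0)\|\le f(0)$, and (h1) $f(0)>0$, $f'(0)=-1$; (h2) $f'$ is strictly increasing and convex; (h3) $f(t)<0$ for some $t\in(0,R)$. Notation: $\kappa:=\sup_{0<t<R}\frac{-f(t)}{t}$,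 $\lambda:=\sup\{t\in[0,R):\kappa+f'(t)<0\}$; $D^-f'(\lambda)$ is the left derivative of $f'$ at $\lambda$. *)

theory Defs
  imports "HOL-Analysis.Analysis"
begin

definition kappa_of :: "(real \<Rightarrow> real) \<Rightarrow> real \<Rightarrow> real" where
  "kappa_of f R = Sup {- f t / t | t. 0 < t \<and> t < R}"

definition lambda_of :: "(real \<Rightarrow> real) \<Rightarrow> (real \<Rightarrow> real) \<Rightarrow> real \<Rightarrow> real" where
  "lambda_of f f' R = Sup {t. 0 \<le> t \<and> t < R \<and> kappa_of f R + f' t < 0}"

definition left_deriv :: "(real \<Rightarrow> real) \<Rightarrow> real \<Rightarrow> real" where
  "left_deriv g x = Lim (at_left x) (\<lambda>s. (g s - g x) / (s - x))"

end

theory Submission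
  imports Defs
begin
lemma kappa_facts:
  fixes f f' :: "real \<Rightarrow> real" and R :: real
  assumes f_deriv: "\<And>s. s \<in> {0..<R} \<Longrightarrow> (f has_real_derivative f' s) (at s within {0..<R})"
    and h1: "f 0 > 0" "f' 0 = -1"
    and sm: "strict_mono_on {0..<R} f'"
    and h3: "\<exists>s\<in>{0<..<R}. f s < 0"
  shows "0 < kappa_of f R" "kappa_of f R < 1" "0 < R"
proof -
  obtain s0 where s0: "s0 \<in> {0<..<R}" "f s0 < 0" using h3 by blast
  show R: "0 < R" using s0 by auto
  have fcont: "continuous_on {0..<R} f"
    by (rule DERIV_continuous_on) (rule f_deriv)
  have bnd: "- f t / t \<le> 1 - f 0 / R" if t: "0 < t" "t < R" for t
  proof -
    have c: "continuous_on {0..t} f" using fcont by (rule continuous_on_subset) (use t in auto)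
    have d: "(f has_real_derivative f' x) (at x)" if "0 < x" "x < t" for x
    proof -
      have "x \<in> interior {0..<R}"
        using that t interior_maximal[of "{0<..<R}" "{0..<R}"] by auto
      then show ?thesis using f_deriv[of x] that t at_within_interior by fastforce
    qed
    have "\<exists>l z. 0 < z \<and> z < t \<and> DERIV f z :> l \<and> f t - f 0 = (t - 0) * l"
      by (rule MVT[OF t(1) c]) (meson d real_differentiable_def)
    then obtain l z where z: "0 < z" "z < t" "DERIV f z :> l" "f t - f 0 = (t - 0) * l"
      by blast
    have "l = f' z" using DERIV_unique[OF z(3) d[OF z(1,2)]] .
    moreover have "f' 0 < f' z" using sm z t by (auto intro!: strict_mono_onD[OF sm])
    ultimately have "l > -1" using h1 by simp
    hence "t * l > t * (-1)" using t by (intro mult_strict_left_mono) auto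
    hence "f t > f 0 - t" using z by simp
    hence "- f t / t < 1 - f 0 / t" using t by (simp add: field_simps)
    moreover have "f 0 / R \<le> f 0 / t" using t h1 by (intro divide_left_mono) auto
    ultimately show ?thesis by linarith
  qed
  let ?S = "{- f t / t | t. 0 < t \<and> t < R}"
  have ne: "?S \<noteq> {}" using s0 by auto
  have bdd: "bdd_above ?S" using bnd by (auto intro!: bdd_aboveI[of _ "1 - f 0 / R"])
  have "kappa_of f R \<le> 1 - f 0 / R" unfolding kappa_of_def
    by (rule cSup_least[OF ne]) (use bnd in auto)
  moreover have "f 0 / R > 0" using h1 R by auto
  ultimately show "kappa_of f R < 1" by linarith
  have "- f s0 / s0 \<le> kappa_of f R" unfolding kappa_of_def
    by (rule cSup_upper[OF _ bdd]) (use s0 in auto)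
  moreover have "- f s0 / s0 > 0" using s0 by (auto simp: field_simps)
  ultimately show "0 < kappa_of f R" by linarith
qed

lemma lambda_facts:
  fixes f f' :: "real \<Rightarrow> real" and R :: real
  assumes f'_cont: "continuous_on {0..<R} f'"
    and h1: "f' 0 = -1"
    and sm: "strict_mono_on {0..<R} f'"
    and k: "0 < kappa_of f R" "kappa_of f R < 1" "0 < R"
    and lam_lt: "lambda_of f f' R < R"
  shows "0 < lambda_of f f' R" "f' (lambda_of f f' R) \<le> - kappa_of f R"
    "\<And>u. 0 \<le> u \<Longrightarrow> u \<le> lambda_of f f' R \<Longrightarrow> f' u \<le> f' (lambda_of f f' R)"
proof -
  define T where "T = {t. 0 \<le> t \<and> t < R \<and> kappa_of f R + f' t < 0}"
  have lam: "lambda_of f f' R = Sup T" unfolding T_def lambda_of_def by simp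
  have ne: "T \<noteq> {}" using k h1 unfolding T_def by (auto intro!: exI[of _ 0])
  have bdd: "bdd_above T" unfolding T_def by (auto intro!: bdd_aboveI[of _ R])
  obtain \<delta> where d: "\<delta> > 0" "\<forall>y\<in>{0..<R}. dist y 0 < \<delta> \<longrightarrow> dist (f' y) (f' 0) < 1 - kappa_of f R"
  proof -
    have "\<forall>x\<in>{0..<R}. \<forall>e>0. \<exists>d>0. \<forall>x'\<in>{0..<R}. dist x' x < d \<longrightarrow> dist (f' x') (f' x) < e"
      using f'_cont by (simp add: continuous_on_iff)
    moreover have "(0::real) \<in> {0..<R}" "1 - kappa_of f R > 0" using k by auto
    ultimately have "\<exists>d>0. \<forall>x'\<in>{0..<R}. dist x' 0 < d \<longrightarrow> dist (f' x') (f' 0) < 1 - kappa_of f R"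
      by blast
    thus ?thesis using that by blast
  qed
  define y where "y = min (\<delta>/2) (R/2)"
  have y: "0 < y" "y < R" "y < \<delta>" using d k unfolding y_def by auto
  have "dist (f' y) (f' 0) < 1 - kappa_of f R" using d y by (auto simp: dist_real_def)
  hence "y \<in> T" using y h1 unfolding T_def by (auto simp: dist_real_def)
  hence "y \<le> Sup T" using bdd by (rule cSup_upper)
  thus lpos: "0 < lambda_of f f' R" using y lam by linarith
  have lR: "lambda_of f f' R \<in> {0..<R}" using lpos lam_lt by auto
  show "f' (lambda_of f f' R) \<le> - kappa_of f R"
  proof (rule ccontr)
    let ?l = "lambda_of f f' R"
    assume "\<not> ?thesis"
    hence e: "f' ?l + kappa_of f R > 0" by linarith
    obtain \<delta>' where d': "\<delta>' > 0" "\<forall>y\<in>{0..<R}. dist y ?l < \<delta>' \<longrightarrow> dist (f' y) (f' ?l) < f' ?l + kappa_of f R"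
    proof -
      have "\<forall>x\<in>{0..<R}. \<forall>e>0. \<exists>d>0. \<forall>x'\<in>{0..<R}. dist x' x < d \<longrightarrow> dist (f' x') (f' x) < e"
        using f'_cont by (simp add: continuous_on_iff)
      hence "\<exists>d>0. \<forall>x'\<in>{0..<R}. dist x' ?l < d \<longrightarrow> dist (f' x') (f' ?l) < f' ?l + kappa_of f R"
        using lR e by blast
      thus ?thesis using that by blast
    qed
    have "?l - \<delta>' < Sup T" using lam d' by linarith
    then obtain u where u: "u \<in> T" "?l - \<delta>' < u" using less_cSupD[OF ne] by blast
    have "u \<le> ?l" using cSup_upper[OF u(1) bdd] lam by simp
    hence "dist u ?l < \<delta>'" using u by (auto simp: dist_real_def)
    hence "dist (f' u) (f' ?l) < f' ?l + kappa_of f R" using d' u unfolding T_def by auto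
    thus False using u unfolding T_def by (auto simp: dist_real_def)
  qed
  fix u assume u: "0 \<le> u" "u \<le> lambda_of f f' R"
  show "f' u \<le> f' (lambda_of f f' R)"
  proof (cases "u = lambda_of f f' R")
    case False
    thus ?thesis using strict_mono_onD[OF sm, of u "lambda_of f f' R"] u lR by auto
  qed simp
qed

lemma left_deriv_ge:
  fixes g :: "real \<Rightarrow> real" and R l :: real
  assumes cv: "convex_on {0..<R} g" and l: "0 < l" "l < R"
  shows "\<And>u. 0 \<le> u \<Longrightarrow> u < l \<Longrightarrow> (g u - g l) / (u - l) \<le> left_deriv g l"
proof -
  define q where "q u = (g u - g l) / (u - l)" for u
  define w where "w = (l + R) / 2"
  have w: "l < w" "w < R" using l unfolding w_def by auto
  have qB: "q u \<le> (g l - g w) / (l - w)" if "0 \<le> u" "u < l" for u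
  proof -
    have "q u \<le> (g u - g w) / (u - w)"
      unfolding q_def by (rule convex_on_slope_le(1)[OF cv]) (use that w l in auto)
    also have "\<dots> \<le> (g l - g w) / (l - w)"
      by (rule convex_on_slope_le(2)[OF cv]) (use that w l in auto)
    finally show ?thesis .
  qed
  have qm: "q u \<le> q v" if "0 \<le> u" "u < v" "v < l" for u v
    unfolding q_def by (rule convex_on_slope_le(2)[OF cv]) (use that l in auto)
  define L where "L = Sup (q ` {0..<l})"
  have ne: "q ` {0..<l} \<noteq> {}" using l by auto
  have bdd: "bdd_above (q ` {0..<l})" using qB by (auto intro!: bdd_aboveI2)
  have "(q \<longlongrightarrow> L) (at_left l)"
  proof (rule increasing_tendsto)
    show "\<forall>\<^sub>F n in at_left l. q n \<le> L"
      using eventually_at_left_real[OF l(1)]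
      by eventually_elim (auto simp: L_def intro!: cSup_upper[OF _ bdd])
    fix x assume "x < L"
    then obtain u where u: "u \<in> {0..<l}" "x < q u" unfolding L_def using less_cSupD[OF ne] by blast
    show "\<forall>\<^sub>F n in at_left l. x < q n"
    proof (cases "u = 0")
      case True
      show ?thesis using eventually_at_left_real[OF l(1)]
        by eventually_elim (use qm[of 0] u True in force)
    next
      case False
      hence "u > 0" using u by auto
      have "u < l" using u by auto
      show ?thesis using eventually_at_left_real[OF \<open>u < l\<close>]
        by eventually_elim (use qm[of u] u in force)
    qed
  qed
  hence "left_deriv g l = L" unfolding left_deriv_def q_def by (intro tendsto_Lim) auto
  fix u assume "0 \<le> u" "u < l"
  thus "(g u - g l) / (u - l) \<le> left_deriv g l"
    using cSup_upper[OF _ bdd, of "q u"] \<open>left_deriv g l = L\<close> by (auto simp: L_def q_def)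
qed

theorem lemma3p7:
  fixes R :: real and C :: "'a::banach set" and F :: "'a \<Rightarrow> 'b::banach"
    and F' :: "'a \<Rightarrow> ('a \<Rightarrow>\<^sub>L 'b)" and Finv :: "'b \<Rightarrow>\<^sub>L 'a"
    and x0 :: 'a and f f' :: "real \<Rightarrow> real"
    and \<theta> t :: real and xs x y :: 'a
  assumes F_cont: "continuous_on C F"
    and F_deriv: "\<And>z. z \<in> interior C \<Longrightarrow> (F has_derivative blinfun_apply (F' z)) (at z)"
    and F'_cont: "continuous_on (interior C) F'"
    and x0_int: "x0 \<in> interior C"
    and Finv_left: "Finv o\<^sub>L F' x0 = id_blinfun"
    and Finv_right: "F' x0 o\<^sub>L Finv = id_blinfun"
    and f_deriv: "\<And>s. s \<in> {0..<R} \<Longrightarrow> (f has_real_derivative f' s) (at s within {0..<R})"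
    and f'_cont: "continuous_on {0..<R} f'"
    and ball_sub: "ball x0 R \<subseteq> C"
    and majorant: "\<And>u v. u \<in> ball x0 R \<Longrightarrow> v \<in> ball x0 R \<Longrightarrow> norm (u - x0) + norm (v - u) < R \<Longrightarrow>
        norm (Finv o\<^sub>L (F' v - F' u)) \<le> f' (norm (v - u) + norm (u - x0)) - f' (norm (u - x0))"
    and init: "norm (Finv (F x0)) \<le> f 0"
    and h1: "f 0 > 0" "f' 0 = -1"
    and h2: "strict_mono_on {0..<R} f'" "convex_on {0..<R} f'"
    and h3: "\<exists>s\<in>{0<..<R}. f s < 0"
    and \<theta>_nonneg: "\<theta> \<ge> 0"
    and t_bounds: "0 \<le> t" "t \<le> lambda_of f f' R"
    and lam_lt: "lambda_of f f' R < R"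
    and x_near: "norm (x - x0) \<le> t"
    and xs_near: "norm (xs - x) \<le> lambda_of f f' R - t"
    and xs_zero: "F xs = 0"
    and inexact: "norm (Finv (F x + F' x (y - x))) \<le> \<theta> * norm (Finv (F x))"
  shows "norm (xs - y) \<le> ((1 + \<theta>) / 2 + 2 * \<theta> / kappa_of f R) * norm (xs - x)
    \<and> norm (xs - y) \<le> ((1 + \<theta>) / 2 * left_deriv f' (lambda_of f f' R) / \<bar>f' (lambda_of f f' R)\<bar> * norm (xs - x)
         + \<theta> * (2 + f' (lambda_of f f' R)) / \<bar>f' (lambda_of f f' R)\<bar>) * norm (xs - x)"
proof -
  define lam where "lam = lambda_of f f' R"
  define kap where "kap = kappa_of f R"
  note kf = kappa_facts[OF f_deriv h1 h2(1) h3]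
  note lf = lambda_facts[OF f'_cont h1(2) h2(1) kf lam_lt]
  have kpos: "0 < kap" and R: "0 < R" using kf by (auto simp: kap_def)
  have lpos: "0 < lam" and flam: "f' lam \<le> - kap" and lmono: "\<And>u. 0 \<le> u \<Longrightarrow> u \<le> lam \<Longrightarrow> f' u \<le> f' lam"
    using lf by (auto simp: lam_def kap_def)
  have lamR: "lam < R" using lam_lt by (simp add: lam_def)
  define D where "D = left_deriv f' lam"
  have Dge: "\<And>u. 0 \<le> u \<Longrightarrow> u < lam \<Longrightarrow> (f' u - f' lam) / (u - lam) \<le> D"
    unfolding D_def by (rule left_deriv_ge[OF h2(2) lpos lamR])
  have D0: "0 \<le> D"
  proof -
    have "f' 0 \<le> f' lam" using lmono lpos by simp
    hence "0 \<le> (f' 0 - f' lam) / (0 - lam)" using lpos by (simp add: divide_nonpos_pos)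
    thus ?thesis using Dge[of 0] lpos by linarith
  qed
  define d where "d = xs - x"
  define s where "s = norm d"
  define tx where "tx = norm (x - x0)"
  have tx0: "0 \<le> tx" and s0: "0 \<le> s" unfolding tx_def s_def by auto
  have txs: "tx + s \<le> lam" using x_near xs_near by (simp add: tx_def s_def d_def lam_def)
  have a_le: "f' tx \<le> f' lam" using lmono tx0 txs s0 by simp
  define a where "a = - f' tx"
  define b where "b = - f' lam"
  have ab: "kap \<le> b" "b \<le> a" "0 < b" using flam a_le kpos by (auto simp: a_def b_def)
  have ballint: "ball x0 R \<subseteq> interior C" by (rule interior_maximal[OF ball_sub]) simp
  have x0b: "x0 \<in> ball x0 R" using R by simp
  have xb: "x \<in> ball x0 R" using txs s0 lamR by (simp add: dist_norm tx_def norm_minus_commute)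
  have Fx0: "Finv (F' x0 v) = v" for v
    using arg_cong[OF Finv_left, of "\<lambda>T. blinfun_apply T v"] by simp
  have M0: "norm (Finv o\<^sub>L (F' x - F' x0)) \<le> f' tx + 1"
    using majorant[OF x0b xb] txs s0 lamR h1(2) by (simp add: tx_def)
  have dev: "norm (Finv (F' x v) - v) \<le> (f' tx + 1) * norm v" for v
  proof -
    have "Finv (F' x v) - v = (Finv o\<^sub>L (F' x - F' x0)) v"
      using Fx0[of v] by (simp add: blinfun.diff_left blinfun.diff_right)
    also have "norm \<dots> \<le> norm (Finv o\<^sub>L (F' x - F' x0)) * norm v" by (rule norm_blinfun)
    also have "\<dots> \<le> (f' tx + 1) * norm v" by (rule mult_right_mono[OF M0]) simp
    finally show ?thesis .
  qed
  have low: "a * norm v \<le> norm (Finv (F' x v))" for v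
  proof -
    have "norm v \<le> norm (Finv (F' x v)) + norm (v - Finv (F' x v))"
      by (rule norm_triangle_sub)
    hence "norm v \<le> norm (Finv (F' x v)) + norm (Finv (F' x v) - v)"
      by (simp add: norm_minus_commute)
    thus ?thesis using dev[of v] by (simp add: a_def algebra_simps)
  qed
  have up: "norm (Finv (F' x d)) \<le> (2 - a) * s"
  proof -
    have "norm (Finv (F' x d)) \<le> norm d + norm (Finv (F' x d) - d)"
      by (rule norm_triangle_sub)
    thus ?thesis using dev[of d] by (simp add: a_def s_def algebra_simps)
  qed
  define E where "E = F xs - F x - F' x d"
  define e where "e = norm (Finv E)"
  have ebnd: "e \<le> s\<^sup>2 / 2 * D \<and> e \<le> s / 2 * a"
  proof (cases "s = 0")
    case True
    hence "d = 0" by (simp add: s_def)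
    hence "E = 0" by (simp add: E_def d_def)
    thus ?thesis using True by (simp add: e_def)
  next
    case False
    hence spos: "0 < s" using s0 by simp
    hence txl: "tx < lam" using txs by simp
    define q where "q = (f' tx - f' lam) / (tx - lam)"
    have qD: "q \<le> D" unfolding q_def using Dge tx0 txl by simp
    have q0: "0 \<le> q" unfolding q_def using a_le txl by (simp add: divide_nonpos_neg)
    have sq: "s * q \<le> a"
    proof -
      have "s * q \<le> (lam - tx) * q" using txs q0 by (intro mult_right_mono) auto
      also have "\<dots> = f' lam - f' tx" unfolding q_def using txl by (simp add: field_simps)
      finally show ?thesis using ab by (simp add: a_def b_def)
    qed
    define p where "p \<tau> = x + \<tau> *\<^sub>R d" for \<tau> :: real
    have pnorm: "norm (p \<tau> - x0) \<le> tx + \<tau> * s" if "0 \<le> \<tau>" for \<tau>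
    proof -
      have "norm (p \<tau> - x0) = norm ((x - x0) + \<tau> *\<^sub>R d)" by (simp add: p_def algebra_simps)
      also have "\<dots> \<le> tx + \<tau> * s" using norm_triangle_ineq[of "x - x0" "\<tau> *\<^sub>R d"] that
        by (simp add: tx_def s_def)
      finally show ?thesis .
    qed
    have pball: "p \<tau> \<in> ball x0 R" if "0 \<le> \<tau>" "\<tau> \<le> 1" for \<tau>
    proof -
      have "\<tau> * s \<le> s" using that spos by (simp add: mult_le_cancel_right1)
      thus ?thesis using pnorm[OF that(1)] txs lamR by (simp add: dist_norm norm_minus_commute)
    qed
    define g where "g \<tau> = Finv (F (p \<tau>) - \<tau> *\<^sub>R F' x d)" for \<tau>
    define g' where "g' \<tau> = Finv (F' (p \<tau>) d - F' x d)" for \<tau>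
    define \<phi> where "\<phi> \<tau> = \<tau>\<^sup>2 / 2 * (s\<^sup>2 * q)" for \<tau> :: real
    have gcont: "continuous_on {0..1} g"
    proof -
      have "continuous_on {0..1} (\<lambda>\<tau>. F (p \<tau>))"
        by (rule continuous_on_compose2[OF F_cont]) (use pball ball_sub in \<open>auto simp: p_def intro!: continuous_intros\<close>)
      thus ?thesis unfolding g_def by (intro continuous_intros)
    qed
    have phicont: "continuous_on {0..1} \<phi>" unfolding \<phi>_def by (intro continuous_intros) auto
    have gder: "(g has_vector_derivative g' \<tau>) (at \<tau>)" if "0 < \<tau>" "\<tau> < 1" for \<tau>
    proof -
      have pi: "p \<tau> \<in> interior C" using pball[of \<tau>] that ballint by auto
      have h1': "(p has_derivative (\<lambda>h. h *\<^sub>R d)) (at \<tau>)"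
        unfolding p_def by (auto intro!: derivative_eq_intros)
      have h2': "((\<lambda>\<tau>. F (p \<tau>)) has_derivative (\<lambda>h. F' (p \<tau>) (h *\<^sub>R d))) (at \<tau>)"
        by (rule has_derivative_compose[OF h1' F_deriv[OF pi]])
      have h3': "((\<lambda>\<tau>. F (p \<tau>) - \<tau> *\<^sub>R F' x d) has_derivative (\<lambda>h. F' (p \<tau>) (h *\<^sub>R d) - h *\<^sub>R F' x d)) (at \<tau>)"
        by (auto intro!: derivative_eq_intros h2')
      have h4': "(g has_derivative (\<lambda>h. Finv (F' (p \<tau>) (h *\<^sub>R d) - h *\<^sub>R F' x d))) (at \<tau>)"
        unfolding g_def by (rule has_derivative_compose[OF h3' bounded_linear_imp_has_derivative]) (rule blinfun.bounded_linear_right)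
      show ?thesis unfolding has_vector_derivative_def
        by (rule has_derivative_eq_rhs[OF h4']) (auto simp: g'_def blinfun.scaleR_right blinfun.diff_right scaleR_diff_right)
    qed
    have phider: "(\<phi> has_vector_derivative \<tau> * (s\<^sup>2 * q)) (at \<tau>)" for \<tau>
      unfolding \<phi>_def has_vector_derivative_def
      by (auto intro!: derivative_eq_intros simp: power2_eq_square field_simps)
    have gbnd: "norm (g' \<tau>) \<le> \<tau> * (s\<^sup>2 * q)" if "0 < \<tau>" "\<tau> < 1" for \<tau>
    proof -
      have pb: "p \<tau> \<in> ball x0 R" using pball that by auto
      have nd: "norm (p \<tau> - x) = \<tau> * s" using that by (simp add: p_def s_def)
      have ts: "\<tau> * s < s" using that spos by simp
      have Mt: "norm (Finv o\<^sub>L (F' (p \<tau>) - F' x)) \<le> f' (\<tau> * s + tx) - f' tx"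
        using majorant[OF xb pb] nd ts txs lamR by (simp add: tx_def)
      have cvx: "f' (tx + \<tau> * s) - f' tx \<le> \<tau> * s * q"
      proof -
        have lt: "tx < tx + \<tau> * s" "tx + \<tau> * s < lam" using that spos ts txs by (simp, linarith)
        have "(f' tx - f' (tx + \<tau> * s)) / (tx - (tx + \<tau> * s)) \<le> q"
          unfolding q_def by (rule convex_on_slope_le(1)[OF h2(2)]) (use lt tx0 lamR in auto)
        moreover have "(f' tx - f' (tx + \<tau> * s)) / (tx - (tx + \<tau> * s)) = (f' (tx + \<tau> * s) - f' tx) / (\<tau> * s)"
          using that spos by (simp add: field_simps)
        ultimately show ?thesis using that spos by (simp add: divide_le_eq mult.commute)
      qed
      have "g' \<tau> = (Finv o\<^sub>L (F' (p \<tau>) - F' x)) d"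
        by (simp add: g'_def blinfun.diff_left)
      hence "norm (g' \<tau>) \<le> norm (Finv o\<^sub>L (F' (p \<tau>) - F' x)) * s"
        using norm_blinfun[of "Finv o\<^sub>L (F' (p \<tau>) - F' x)" d] unfolding s_def by (simp only:)
      also have "\<dots> \<le> (\<tau> * s * q) * s"
        using Mt cvx spos by (intro mult_right_mono) (auto simp: add.commute)
      finally show ?thesis by (simp add: power2_eq_square mult_ac)
    qed
    have "norm (g 1 - g 0) \<le> \<phi> 1 - \<phi> 0"
      by (rule differentiable_bound_general[OF zero_less_one gcont phicont gder phider gbnd])
    moreover have "g 1 - g 0 = Finv E"
      by (simp add: g_def p_def E_def d_def blinfun.diff_right)
    ultimately have e1: "e \<le> s\<^sup>2 / 2 * q" by (simp add: e_def \<phi>_def)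
    have "s\<^sup>2 / 2 * q \<le> s\<^sup>2 / 2 * D" using qD by (intro mult_left_mono) auto
    moreover have "s\<^sup>2 / 2 * q = s / 2 * (s * q)" by (simp add: power2_eq_square)
    moreover have "s / 2 * (s * q) \<le> s / 2 * a" using sq s0 by (intro mult_left_mono) auto
    ultimately show ?thesis using e1 by linarith
  qed
  define L where "L = norm (xs - y)"
  have rx: "norm (Finv (F x)) \<le> e + (2 - a) * s"
  proof -
    have "Finv (F x) = - Finv E - Finv (F' x d)"
      using xs_zero by (simp add: E_def blinfun.diff_right blinfun.minus_right)
    moreover have "norm (- Finv E - Finv (F' x d)) \<le> norm (- Finv E) + norm (Finv (F' x d))"
      by (rule norm_triangle_ineq4)
    ultimately have "norm (Finv (F x)) \<le> norm (Finv E) + norm (Finv (F' x d))"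
      by simp
    thus ?thesis using up by (simp add: e_def)
  qed
  have main: "a * L \<le> (1 + \<theta>) * e + \<theta> * (2 - a) * s"
  proof -
    define r where "r = F x + F' x (y - x)"
    have "Finv (F' x (xs - y)) = - Finv E - Finv r"
    proof -
      have "xs - y = d - (y - x)" by (simp add: d_def)
      hence eq1: "F' x (xs - y) = F' x d - F' x (y - x)" by (metis blinfun.diff_right)
      show ?thesis using xs_zero unfolding eq1 E_def r_def
        by (simp add: blinfun.diff_right blinfun.minus_right blinfun.add_right blinfun.zero_right algebra_simps)
    qed
    moreover have "norm (- Finv E - Finv r) \<le> norm (- Finv E) + norm (Finv r)"
      by (rule norm_triangle_ineq4)
    ultimately have "norm (Finv (F' x (xs - y))) \<le> e + norm (Finv r)"
      by (simp add: e_def)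
    moreover have "norm (Finv r) \<le> \<theta> * (e + (2 - a) * s)"
    proof -
      have "\<theta> * norm (Finv (F x)) \<le> \<theta> * (e + (2 - a) * s)"
        using rx \<theta>_nonneg by (rule mult_left_mono)
      thus ?thesis using inexact unfolding r_def by linarith
    qed
    ultimately have "norm (Finv (F' x (xs - y))) \<le> e + \<theta> * (e + (2 - a) * s)" by linarith
    thus ?thesis using low[of "xs - y"] by (simp add: L_def algebra_simps)
  qed
  have apos: "0 < a" using ab by linarith
  have e0: "0 \<le> e" by (simp add: e_def)
  have L1: "L \<le> (1 + \<theta>) * e / a + \<theta> * (2 / a - 1) * s"
  proof -
    have "L \<le> ((1 + \<theta>) * e + \<theta> * (2 - a) * s) / a" using main apos by (simp add: field_simps)
    also have "\<dots> = (1 + \<theta>) * e / a + \<theta> * (2 / a - 1) * s" using apos by (simp add: field_simps)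
    finally show ?thesis .
  qed
  have c1: "L \<le> ((1 + \<theta>) / 2 + 2 * \<theta> / kap) * s"
  proof -
    have "(1 + \<theta>) * e / a \<le> (1 + \<theta>) * (s / 2 * a) / a"
      using ebnd \<theta>_nonneg apos by (intro divide_right_mono mult_left_mono) auto
    also have "\<dots> = (1 + \<theta>) / 2 * s" using apos by simp
    finally have A1: "(1 + \<theta>) * e / a \<le> (1 + \<theta>) / 2 * s" .
    have "2 / a \<le> 2 / kap" using ab kpos apos by (intro divide_left_mono) auto
    hence "2 / a - 1 \<le> 2 / kap" by linarith
    hence "\<theta> * (2 / a - 1) * s \<le> \<theta> * (2 / kap) * s"
      using \<theta>_nonneg s0 by (intro mult_right_mono mult_left_mono) auto
    moreover have "((1 + \<theta>) / 2 + 2 * \<theta> / kap) * s = (1 + \<theta>) / 2 * s + \<theta> * (2 / kap) * s"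
      by (simp add: algebra_simps)
    ultimately show ?thesis using L1 A1 by linarith
  qed
  have c2: "L \<le> ((1 + \<theta>) / 2 * D / b * s + \<theta> * (2 - b) / b) * s"
  proof -
    have "(1 + \<theta>) * e / a \<le> (1 + \<theta>) * (s\<^sup>2 / 2 * D) / a"
      using ebnd \<theta>_nonneg apos by (intro divide_right_mono mult_left_mono) auto
    also have "\<dots> \<le> (1 + \<theta>) * (s\<^sup>2 / 2 * D) / b"
      using ab \<theta>_nonneg D0 by (intro divide_left_mono) auto
    also have "\<dots> = (1 + \<theta>) / 2 * D / b * s * s" by (simp add: power2_eq_square)
    finally have A1: "(1 + \<theta>) * e / a \<le> (1 + \<theta>) / 2 * D / b * s * s" .
    have "2 / a \<le> 2 / b" using ab by (intro divide_left_mono) auto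
    hence "2 / a - 1 \<le> 2 / b - 1" by linarith
    hence "\<theta> * (2 / a - 1) * s \<le> \<theta> * (2 / b - 1) * s"
      using \<theta>_nonneg s0 by (intro mult_right_mono mult_left_mono) auto
    moreover have "\<theta> * (2 / b - 1) * s = \<theta> * (2 - b) / b * s" using ab by (simp add: field_simps)
    moreover have "((1 + \<theta>) / 2 * D / b * s + \<theta> * (2 - b) / b) * s = (1 + \<theta>) / 2 * D / b * s * s + \<theta> * (2 - b) / b * s"
      by (simp add: algebra_simps)
    ultimately show ?thesis using L1 A1 by linarith
  qed
  have fl: "\<bar>f' lam\<bar> = b" "2 + f' lam = 2 - b" using ab by (auto simp: b_def)
  show ?thesis using c1 c2 fl
    by (simp add: L_def s_def d_def kap_def lam_def D_def)
qed

end
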